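(* Assume $\bm\lambda\neq0$ and $\bm\mu\neq0$. For $r\in\mathbb Z$ and a polynomial $f\in\mathbb C[x]$ define the operator $T_{r,f}=\sum_{j\in\mathbb Z} f(-j)\,:a(r-j)a^*(j):$ on $M_1(\bm\lambda,\bm\mu)$ (well defined, since on each vector only finitely many summands act nontrivially). Then $M_1(\bm\lambda,\bm\mu)$ is generated by $w$ under the operators $T_{r,f}$, i.e. the smallest subspace containing $w$ and invariant under all $T_{r,f}$ is $M_1(\bm\lambda,\bm\mu)$. Equivalently, $M_1(\bm\lambda,\bm\mu)$ is a cyclic module, generated by $w$, for the vertex algebra $\mathcal W_{1+\infty,c=-1}\cong M^0$.
   Context: Let $\widehat{\mathcal A}$ be the Weyl algebra: the unital associative complex algebra generated by $a(r),a^*(r)$ ($r\in\mathbb Z$) with relations $[a(r),a(s)]=[a^*(r),a^*(s)]=0$ and $[a(r),a^*(s)]=\delta_{r+s,0}$. Fix integers $n\ge 0$, $m\ge 1$, $\bm\lambda=(\lambda_0,\dots,\lambda_n)\in\mathbb C^{n+1}$, $\bm\mu=(\mu_1,\dots,\mu_m)\in\mathbb C^m$, and set $\lambda_i=0$ for $i>n$, $\mu_j=0$ for $j>m$. The Whittaker module $M_1(\bm\lambda,\bm\mu)=\widehat{\mathcal A}/\mathcal I$, where $\mathcal I$ is the left ideal generated by $a(i)-\lambda_i$ ($i\ge 0$) and $a^*(j)-\mu_j$ ($j\ge 1$); $w=w_{\bm\lambda,\bm\mu}$ denotes the image of $1$. Normal ordering: $:a(i)a^*(j):$ equals $a^*(j)a(i)$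 if $i\ge 0$ and $j\le 0$, and equals $a(i)a^*(j)$ otherwise. The operators $T_{r,f}$ are the images of $t^rf(D)$ ($D=t\,\partial_t$) under the representation of the central extension $\widehat{\mathcal D}$ of the Lie algebra of regular differential operators on $\mathbb C^*$; the Weyl vertex algebra $M$ has fields $a(z)=\sum a(r)z^{-r-1}$, $a^*(z)=\sum a^*(r)z^{-r}$, its subalgebra $M^0=\ker J^0(0)$ (with $J^0(z)=:a(z)a^*(z):$) is isomorphic to the simple vertex algebra $\mathcal W_{1+\infty}$ at central charge $-1$, and it is generated by the fields $:(\partial_z^k a^*(z))a(z):$, $k\ge0$, whose modes are the operators $T_{r,f}$ with $f(x)=x(x-1)\cdots(x-k+1)$. *)

theory Defs
  imports "HOL-Computational_Algebra.Polynomial"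
begin

text \<open>Generators of the Weyl algebra: A r stands for a(r), Astar r for a*(r).\<close>
datatype gen = A int | Astar int

text \<open>The free associative unital complex algebra on the generators:
  finitely supported functions from words (lists of generators) to complex numbers.\<close>
type_synonym fa = "gen list \<Rightarrow> complex"

definition finsupp :: "fa \<Rightarrow> bool" where
  "finsupp p \<longleftrightarrow> finite {w. p w \<noteq> 0}"

definition word :: "gen list \<Rightarrow> fa" where
  "word u = (\<lambda>w. if w = u then 1 else 0)"

definition fa_zero :: fa where
  "fa_zero = (\<lambda>w. 0)"

definition fa_add :: "fa \<Rightarrow> fa \<Rightarrow> fa" where
  "fa_add p q = (\<lambda>w. p w + q w)"

definition fa_diff :: "fa \<Rightarrow> fa \<Rightarrow> fa" where
  "fa_diff p q = (\<lambda>w. p w - q w)"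

definition fa_scale :: "complex \<Rightarrow> fa \<Rightarrow> fa" where
  "fa_scale c p = (\<lambda>w. c * p w)"

definition fa_mult :: "fa \<Rightarrow> fa \<Rightarrow> fa" where
  "fa_mult p q = (\<lambda>w. \<Sum>i\<le>length w. p (take i w) * q (drop i w))"

definition weyl_relators :: "fa set" where
  "weyl_relators =
     {fa_diff (word [A r, A s]) (word [A s, A r]) | r s. True}
   \<union> {fa_diff (word [Astar r, Astar s]) (word [Astar s, Astar r]) | r s. True}
   \<union> {fa_diff (fa_diff (word [A r, Astar s]) (word [Astar s, A r]))
              (if r + s = 0 then word [] else fa_zero) | r s. True}"

definition whit_gens :: "(nat \<Rightarrow> complex) \<Rightarrow> (nat \<Rightarrow> complex) \<Rightarrow> fa set" where
  "whit_gens lam mu =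
     {fa_diff (word [A (int i)]) (fa_scale (lam i) (word [])) | i. True}
   \<union> {fa_diff (word [Astar (int j)]) (fa_scale (mu j) (word [])) | j. j \<ge> 1}"

text \<open>The kernel of the projection from the free algebra onto
  M_1(lambda,mu) = Weyl / I: it is the two-sided ideal generated by the Weyl
  relators plus the left ideal generated by the Whittaker generators.\<close>
inductive_set whitK :: "(nat \<Rightarrow> complex) \<Rightarrow> (nat \<Rightarrow> complex) \<Rightarrow> fa set"
  for lam mu where
  zero: "fa_zero \<in> whitK lam mu"
| add: "p \<in> whitK lam mu \<Longrightarrow> q \<in> whitK lam mu \<Longrightarrow> fa_add p q \<in> whitK lam mu"
| scale: "p \<in> whitK lam mu \<Longrightarrow> fa_scale c p \<in> whitK lam mu"
| rel: "finsupp x \<Longrightarrow> finsupp y \<Longrightarrow> \<rho> \<in> weyl_relators \<Longrightarrow>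
          fa_mult (fa_mult x \<rho>) y \<in> whitK lam mu"
| whit: "finsupp x \<Longrightarrow> g \<in> whit_gens lam mu \<Longrightarrow> fa_mult x g \<in> whitK lam mu"

definition nord :: "int \<Rightarrow> int \<Rightarrow> gen list" where
  "nord i j = (if i \<ge> 0 \<and> j \<le> 0 then [Astar j, A i] else [A i, Astar j])"

definition Tterm :: "int \<Rightarrow> complex poly \<Rightarrow> fa \<Rightarrow> int \<Rightarrow> fa" where
  "Tterm r f v j = fa_scale (poly f (- of_int j)) (fa_mult (word (nord (r - j) j)) v)"

text \<open>T_{r,f} applied to (a representative of) a vector v of M_1(lambda,mu):
  the sum of those summands which are nonzero in M_1(lambda,mu)
  (finitely many, by the paper; the sum is taken modulo whitK).\<close>
definition Top :: "(nat \<Rightarrow> complex) \<Rightarrow> (nat \<Rightarrow> complex) \<Rightarrow> int \<Rightarrow> complex poly \<Rightarrow> fa \<Rightarrow> fa" where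
  "Top lam mu r f v =
     (\<lambda>w. \<Sum>j\<in>{j. Tterm r f v j \<notin> whitK lam mu}. Tterm r f v j w)"

end

theory Submission
  imports Defs
begin

definition closedT :: "fa set \<Rightarrow> bool" where
  "closedT T \<longleftrightarrow> (\<forall>p\<in>T. \<forall>q\<in>T. fa_add p q \<in> T) \<and> (\<forall>c. \<forall>p\<in>T. fa_scale c p \<in> T)"

lemma lin:
  assumes "closedT T" "p \<in> T" "q \<in> T" "\<And>w. r w = \<alpha> * p w + \<beta> * q w"
  shows "r \<in> T"
proof -
  have "fa_add (fa_scale \<alpha> p) (fa_scale \<beta> q) \<in> T"
    using assms(1-3) unfolding closedT_def by blast
  moreover have "fa_add (fa_scale \<alpha> p) (fa_scale \<beta> q) = r"
    using assms(4) by (auto simp: fa_add_def fa_scale_def)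
  ultimately show ?thesis by simp
qed

lemma closedK: "closedT (whitK lam mu)"
  unfolding closedT_def by (auto intro: whitK.add whitK.scale)

lemma finsupp_word: "finsupp (word u)"
proof -
  have "{w. word u w \<noteq> 0} = {u}" by (auto simp: word_def)
  thus ?thesis by (simp add: finsupp_def)
qed

lemma fa_mult_word: "fa_mult (word a) (word b) = word (a @ b)"
proof
  fix w
  have eq: "\<And>i. i \<in> {..length w} \<Longrightarrow> word a (take i w) * word b (drop i w)
        = (if i = length a then (if w = a @ b then 1 else 0) else 0)"
  proof -
    fix i assume "i \<in> {..length w}"
    hence il: "i \<le> length w" by simp
    show "word a (take i w) * word b (drop i w)
        = (if i = length a then (if w = a @ b then 1 else 0) else 0)"
    proof (cases "take i w = a \<and> drop i w = b")
      case True
      hence "w = a @ b" by (metis append_take_drop_id)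
      moreover have "i = length a" using True il by auto
      ultimately show ?thesis using True by (simp add: word_def)
    next
      case False
      have "\<not> (i = length a \<and> w = a @ b)" using False by auto
      thus ?thesis using False by (auto simp: word_def)
    qed
  qed
  have "fa_mult (word a) (word b) w = (\<Sum>i\<le>length w. (if i = length a then (if w = a @ b then 1 else 0) else 0))"
    unfolding fa_mult_def using eq by (rule sum.cong[OF refl])
  also have "\<dots> = word (a @ b) w"
    by (auto simp: word_def)
  finally show "fa_mult (word a) (word b) w = word (a @ b) w" .
qed

lemma fa_mult_diff_l: "fa_mult (fa_diff p q) r = fa_diff (fa_mult p r) (fa_mult q r)"
  by (auto simp: fa_mult_def fa_diff_def left_diff_distrib sum_subtractf)

lemma fa_mult_diff_r: "fa_mult r (fa_diff p q) = fa_diff (fa_mult r p) (fa_mult r q)"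
  by (auto simp: fa_mult_def fa_diff_def right_diff_distrib sum_subtractf)

lemma fa_mult_zero_l: "fa_mult fa_zero p = fa_zero"
  by (auto simp: fa_mult_def fa_zero_def)

lemma fa_mult_zero_r: "fa_mult p fa_zero = fa_zero"
  by (auto simp: fa_mult_def fa_zero_def)

lemma fa_mult_scale_r: "fa_mult p (fa_scale c q) = fa_scale c (fa_mult p q)"
  by (auto simp: fa_mult_def fa_scale_def sum_distrib_left algebra_simps)

lemmas fa_simps = fa_mult_diff_l fa_mult_diff_r fa_mult_zero_l fa_mult_zero_r
  fa_mult_scale_r fa_mult_word

lemma relK:
  assumes "\<rho> \<in> weyl_relators"
  shows "fa_mult (fa_mult (word x) \<rho>) (word y) \<in> whitK lam mu"
  using assms by (intro whitK.rel finsupp_word)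

definition killv :: "(nat \<Rightarrow> complex) \<Rightarrow> (nat \<Rightarrow> complex) \<Rightarrow> gen \<Rightarrow> complex \<Rightarrow> bool" where
  "killv lam mu c \<kappa> \<longleftrightarrow> (\<exists>i. c = A (int i) \<and> \<kappa> = lam i) \<or> (\<exists>j. j \<ge> 1 \<and> c = Astar (int j) \<and> \<kappa> = mu j)"

definition coll :: "gen \<Rightarrow> gen \<Rightarrow> bool" where
  "coll c d \<longleftrightarrow> (\<exists>i s. c = A i \<and> d = Astar s \<and> i + s = 0) \<or> (\<exists>j s. c = Astar j \<and> d = A s \<and> s + j = 0)"

lemma kill_base:
  assumes "killv lam mu c \<kappa>"
  shows "fa_diff (word (x @ [c])) (fa_scale \<kappa> (word x)) \<in> whitK lam mu"
proof -
  obtain g where g: "g \<in> whit_gens lam mu" "g = fa_diff (word [c]) (fa_scale \<kappa> (word []))"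
    using assms unfolding killv_def whit_gens_def by auto
  have "fa_mult (word x) g \<in> whitK lam mu" using g by (intro whitK.whit finsupp_word)
  thus ?thesis using g by (simp add: fa_simps)
qed

lemma step1:
  assumes cl: "closedT T" and KT: "whitK lam mu \<subseteq> T"
    and cz: "coll c d \<Longrightarrow> word (x @ t) \<in> T"
  shows "fa_diff (word (x @ c # d # t)) (word (x @ d # c # t)) \<in> T"
proof -
  let ?W1 = "word (x @ c # d # t)" and ?W2 = "word (x @ d # c # t)" and ?Z = "word (x @ t)"
  show ?thesis
  proof (cases c)
    case (A i) note c = this
    show ?thesis
    proof (cases d)
      case (A s)
      let ?\<rho> = "fa_diff (word [gen.A i, gen.A s]) (word [gen.A s, gen.A i])"
      have "?\<rho> \<in> weyl_relators" unfolding weyl_relators_def by blast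
      hence "fa_mult (fa_mult (word x) ?\<rho>) (word t) \<in> T" using KT relK by blast
      thus ?thesis using c A by (simp add: fa_simps)
    next
      case (Astar s)
      let ?\<rho> = "fa_diff (fa_diff (word [gen.A i, Astar s]) (word [Astar s, gen.A i]))
              (if i + s = 0 then word [] else fa_zero)"
      have "?\<rho> \<in> weyl_relators" unfolding weyl_relators_def by blast
      hence R: "fa_mult (fa_mult (word x) ?\<rho>) (word t) \<in> T" using KT relK by blast
      show ?thesis
      proof (cases "i + s = 0")
        case True
        hence Z: "?Z \<in> T" using cz c Astar by (simp add: coll_def)
        show ?thesis
          by (rule lin[OF cl R Z, of _ 1 1]) (use c Astar True in \<open>simp add: fa_simps, simp add: fa_diff_def\<close>)
      next
        case False
        show ?thesis
          by (rule lin[OF cl R R, of _ 1 0]) (use c Astar False in \<open>simp add: fa_simps, simp add: fa_diff_def fa_zero_def\<close>)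
      qed
    qed
  next
    case (Astar j) note c = this
    show ?thesis
    proof (cases d)
      case (Astar s)
      let ?\<rho> = "fa_diff (word [gen.Astar j, gen.Astar s]) (word [gen.Astar s, gen.Astar j])"
      have "?\<rho> \<in> weyl_relators" unfolding weyl_relators_def by blast
      hence "fa_mult (fa_mult (word x) ?\<rho>) (word t) \<in> T" using KT relK by blast
      thus ?thesis using c Astar by (simp add: fa_simps)
    next
      case (A s)
      let ?\<rho> = "fa_diff (fa_diff (word [gen.A s, Astar j]) (word [Astar j, gen.A s]))
              (if s + j = 0 then word [] else fa_zero)"
      have "?\<rho> \<in> weyl_relators" unfolding weyl_relators_def by blast
      hence R: "fa_mult (fa_mult (word x) ?\<rho>) (word t) \<in> T" using KT relK by blast
      show ?thesis
      proof (cases "s + j = 0")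
        case True
        hence Z: "?Z \<in> T" using cz c A by (simp add: coll_def)
        show ?thesis
          by (rule lin[OF cl R Z, of _ "-1" "-1"]) (use c A True in \<open>simp add: fa_simps, simp add: fa_diff_def\<close>)
      next
        case False
        show ?thesis
          by (rule lin[OF cl R R, of _ "-1" 0]) (use c A False in \<open>simp add: fa_simps, simp add: fa_diff_def fa_zero_def\<close>)
      qed
    qed
  qed
qed

lemma comm:
  assumes cl: "closedT T" and KT: "whitK lam mu \<subseteq> T" and kill: "killv lam mu c \<kappa>"
    and cz: "\<forall>t1 d t2. t = t1 @ d # t2 \<longrightarrow> coll c d \<longrightarrow> word (x @ t1 @ t2) \<in> T"
  shows "fa_diff (word (x @ c # t)) (fa_scale \<kappa> (word (x @ t))) \<in> T"
  using cz
proof (induction t arbitrary: x)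
  case Nil
  then show ?case using kill_base[OF kill] KT by auto
next
  case (Cons d t)
  have S1: "fa_diff (word (x @ c # d # t)) (word (x @ d # c # t)) \<in> T"
    by (rule step1[OF cl KT]) (use Cons.prems in \<open>metis append_Nil\<close>)
  have "\<forall>t1 d' t2. t = t1 @ d' # t2 \<longrightarrow> coll c d' \<longrightarrow> word ((x @ [d]) @ t1 @ t2) \<in> T"
  proof (intro allI impI)
    fix t1 d' t2 assume "t = t1 @ d' # t2" "coll c d'"
    hence "word (x @ (d # t1) @ t2) \<in> T" using Cons.prems by (metis append_Cons)
    thus "word ((x @ [d]) @ t1 @ t2) \<in> T" by simp
  qed
  from Cons.IH[OF this]
  have S2: "fa_diff (word (x @ d # c # t)) (fa_scale \<kappa> (word (x @ d # t))) \<in> T" by simp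
  show ?case
    by (rule lin[OF cl S1 S2, of _ 1 1]) (simp add: fa_diff_def)
qed


fun absg :: "gen \<Rightarrow> int" where
  "absg (A s) = \<bar>s\<bar>" | "absg (Astar s) = \<bar>s\<bar>"

lemma absg_le: "d \<in> set t \<Longrightarrow> absg d \<le> sum_list (map absg t)"
proof (induction t)
  case Nil thus ?case by simp
next
  case (Cons a t)
  have "0 \<le> sum_list (map absg t)" by (induction t) (auto, case_tac a, auto)
  moreover have "0 \<le> absg a" by (cases a) auto
  ultimately show ?case using Cons by auto
qed

lemma diff_scale0: "fa_diff p (fa_scale 0 q) = p"
  by (auto simp: fa_diff_def fa_scale_def)

lemma large_in_K:
  assumes lz: "\<forall>i>n. lam i = 0" and mz: "\<forall>j>m. mu j = 0"
    and jb: "\<bar>j\<bar> > sum_list (map absg t) + \<bar>r\<bar> + int n + int m + 1"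
  shows "word (nord (r - j) j @ t) \<in> whitK lam mu"
proof -
  have L0: "0 \<le> sum_list (map absg t)"
    by (induction t) (auto, case_tac a, auto)
  show ?thesis
  proof (cases "j > 0")
    case True
    hence nd: "nord (r - j) j = [A (r - j), Astar j]" by (simp add: nord_def)
    have kv: "killv lam mu (Astar j) (mu (nat j))"
      unfolding killv_def using True by (intro disjI2 exI[of _ "nat j"]) auto
    have "nat j > m" using True jb L0 by linarith
    hence mu0: "mu (nat j) = 0" using mz by auto
    have "fa_diff (word ([A (r - j)] @ Astar j # t)) (fa_scale (mu (nat j)) (word ([A (r - j)] @ t))) \<in> whitK lam mu"
    proof (rule comm[OF closedK order_refl kv], intro allI impI)
      fix t1 d t2 assume t: "t = t1 @ d # t2" and "coll (Astar j) d"
      then obtain s where d: "d = A s" "s + j = 0" by (auto simp: coll_def)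
      have "absg d \<le> sum_list (map absg t)" using t by (intro absg_le) auto
      thus "word ([A (r - j)] @ t1 @ t2) \<in> whitK lam mu" using d jb True L0 by auto
    qed
    thus ?thesis using nd mu0 by (simp add: diff_scale0)
  next
    case False
    hence jn: "j < 0" using jb L0 by auto
    have rj: "r - j > 0" using jn jb L0 by auto
    hence nd: "nord (r - j) j = [Astar j, A (r - j)]" using jn by (simp add: nord_def)
    have kv: "killv lam mu (A (r - j)) (lam (nat (r - j)))"
      unfolding killv_def using rj by (intro disjI1 exI[of _ "nat (r - j)"]) auto
    have "nat (r - j) > n" using rj jb jn L0 by linarith
    hence l0: "lam (nat (r - j)) = 0" using lz by auto
    have "fa_diff (word ([Astar j] @ A (r - j) # t)) (fa_scale (lam (nat (r - j))) (word ([Astar j] @ t))) \<in> whitK lam mu"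
    proof (rule comm[OF closedK order_refl kv], intro allI impI)
      fix t1 d t2 assume t: "t = t1 @ d # t2" and "coll (A (r - j)) d"
      then obtain s where d: "d = Astar s" "r - j + s = 0" by (auto simp: coll_def)
      have "absg d \<le> sum_list (map absg t)" using t by (intro absg_le) auto
      thus "word ([Astar j] @ t1 @ t2) \<in> whitK lam mu" using d jb jn L0 by auto
    qed
    thus ?thesis using nd l0 by (simp add: diff_scale0)
  qed
qed

lemma scale_inv: "c \<noteq> 0 \<Longrightarrow> fa_scale (1 / c) (fa_scale c p) = p"
  by (auto simp: fa_scale_def)

lemma scale_zero: "fa_scale 0 p = fa_zero"
  by (auto simp: fa_scale_def fa_zero_def)

lemma op_lemma:
  assumes lz: "\<forall>i>n. lam i = 0" and mz: "\<forall>j>m. mu j = 0"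
    and KS: "whitK lam mu \<subseteq> S" and clS: "closedT S"
    and top: "\<forall>r f v. v \<in> S \<longrightarrow> finsupp v \<longrightarrow> Top lam mu r f v \<in> S"
    and tS: "word t \<in> S"
  shows "word (nord p q @ t) \<in> S"
proof (cases "word (nord p q @ t) \<in> whitK lam mu")
  case True thus ?thesis using KS by auto
next
  case False
  define r where "r = p + q"
  define J0 where "J0 = {j. word (nord (r - j) j @ t) \<notin> whitK lam mu}"
  define B where "B = sum_list (map absg t) + \<bar>r\<bar> + int n + int m + 1"
  have "J0 \<subseteq> {-B..B}"
  proof
    fix j assume "j \<in> J0"
    hence "\<not> \<bar>j\<bar> > B" using large_in_K[OF lz mz, of t r j] unfolding J0_def B_def by auto
    thus "j \<in> {-B..B}" by auto
  qed
  hence finJ: "finite J0" by (rule finite_subset) auto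
  have qJ: "q \<in> J0" using False unfolding J0_def r_def by simp
  define f :: "complex poly" where "f = (\<Prod>k\<in>J0 - {q}. [:of_int k, 1:])"
  have pf: "poly f x = (\<Prod>k\<in>J0 - {q}. of_int k + x)" for x
    unfolding f_def by (simp add: poly_prod)
  have TT: "Tterm r f (word t) j = fa_scale (poly f (- of_int j)) (word (nord (r - j) j @ t))" for j
    by (simp add: Tterm_def fa_mult_word)
  have cq: "poly f (- of_int q) \<noteq> 0"
    unfolding pf using finJ by (auto simp: prod_zero_iff)
  have set_eq: "{j. Tterm r f (word t) j \<notin> whitK lam mu} = {q}"
  proof (intro set_eqI iffI)
    fix j assume j: "j \<in> {j. Tterm r f (word t) j \<notin> whitK lam mu}"
    show "j \<in> {q}"
    proof (rule ccontr)
      assume jq: "j \<notin> {q}"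
      show False
      proof (cases "j \<in> J0")
        case True
        have "poly f (- of_int j) = 0" unfolding pf using finJ True jq
          by (auto simp: prod_zero_iff intro: bexI[of _ j])
        thus False using j TT[of j] scale_zero whitK.zero by auto
      next
        case False
        thus False using j TT[of j] unfolding J0_def by (auto intro: whitK.scale)
      qed
    qed
  next
    fix j assume "j \<in> {q}"
    hence jq: "j = q" by simp
    show "j \<in> {j. Tterm r f (word t) j \<notin> whitK lam mu}"
    proof (rule CollectI, rule notI)
      assume "Tterm r f (word t) j \<in> whitK lam mu"
      hence "fa_scale (1 / poly f (- of_int q)) (Tterm r f (word t) q) \<in> whitK lam mu"
        using jq by (auto intro: whitK.scale)
      hence "word (nord (r - q) q @ t) \<in> whitK lam mu" using TT[of q] scale_inv[OF cq] by simp
      thus False using qJ unfolding J0_def by simp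
    qed
  qed
  have "Top lam mu r f (word t) = Tterm r f (word t) q"
    unfolding Top_def set_eq by simp
  hence "Tterm r f (word t) q \<in> S" using top tS finsupp_word by metis
  hence "fa_scale (1 / poly f (- of_int q)) (Tterm r f (word t) q) \<in> S"
    using clS unfolding closedT_def by blast
  thus ?thesis using TT[of q] scale_inv[OF cq] unfolding r_def by simp
qed

lemma all_words:
  assumes lz: "\<forall>i>n. lam i = 0" and mz: "\<forall>j>m. mu j = 0"
    and lnz: "\<exists>i\<le>n. lam i \<noteq> 0" and mnz: "\<exists>j\<in>{1..m}. mu j \<noteq> 0"
    and KS: "whitK lam mu \<subseteq> S" and clS: "closedT S"
    and top: "\<forall>r f v. v \<in> S \<longrightarrow> finsupp v \<longrightarrow> Top lam mu r f v \<in> S"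
    and eS: "word [] \<in> S"
  shows "word u \<in> S"
proof (induction "length u" arbitrary: u rule: less_induct)
  case less
  obtain i0 where i0: "lam i0 \<noteq> 0" using lnz by auto
  obtain j0 where j0: "j0 \<ge> 1" "mu j0 \<noteq> 0" using mnz by auto
  have shorter: "\<And>v. length v < length u \<Longrightarrow> word v \<in> S" using less by auto
  show ?case
  proof (cases u)
    case Nil thus ?thesis using eS by simp
  next
    case (Cons g t)
    have tS: "word t \<in> S" using shorter Cons by simp
    show ?thesis
    proof (cases g)
      case (A p)
      have G: "word ([A p, Astar (int j0)] @ t) \<in> S"
        using op_lemma[OF lz mz KS clS top tS, of p "int j0"] j0 by (simp add: nord_def)
      have kv: "killv lam mu (Astar (int j0)) (mu j0)" unfolding killv_def using j0 by auto
      have D: "fa_diff (word ([A p] @ Astar (int j0) # t)) (fa_scale (mu j0) (word ([A p] @ t))) \<in> S"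
        by (rule comm[OF clS KS kv]) (use shorter Cons in auto)
      show ?thesis
        by (rule lin[OF clS G D, of _ "1 / mu j0" "- 1 / mu j0"])
           (use j0 Cons A in \<open>auto simp: fa_diff_def fa_scale_def field_simps\<close>)
    next
      case (Astar q)
      show ?thesis
      proof (cases "q \<ge> 1")
        case True
        have kv: "killv lam mu (Astar q) (mu (nat q))"
          unfolding killv_def using True by (intro disjI2 exI[of _ "nat q"]) auto
        have D: "fa_diff (word ([] @ Astar q # t)) (fa_scale (mu (nat q)) (word ([] @ t))) \<in> S"
          by (rule comm[OF clS KS kv]) (use shorter Cons in auto)
        show ?thesis
          by (rule lin[OF clS D tS, of _ 1 "mu (nat q)"])
             (use Cons Astar in \<open>auto simp: fa_diff_def fa_scale_def\<close>)
      next
        case False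
        have G: "word ([Astar q, A (int i0)] @ t) \<in> S"
          using op_lemma[OF lz mz KS clS top tS, of "int i0" q] False by (simp add: nord_def)
        have kv: "killv lam mu (A (int i0)) (lam i0)" unfolding killv_def by auto
        have D: "fa_diff (word ([Astar q] @ A (int i0) # t)) (fa_scale (lam i0) (word ([Astar q] @ t))) \<in> S"
          by (rule comm[OF clS KS kv]) (use shorter Cons in auto)
        show ?thesis
          by (rule lin[OF clS G D, of _ "1 / lam i0" "- 1 / lam i0"])
             (use i0 Cons Astar in \<open>auto simp: fa_diff_def fa_scale_def field_simps\<close>)
      qed
    qed
  qed
qed

theorem theorem5p2:
  fixes n m :: nat and lam mu :: "nat \<Rightarrow> complex"
  assumes "m \<ge> 1"
    and "\<forall>i>n. lam i = 0"
    and "\<forall>j>m. mu j = 0"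
    and "\<exists>i\<le>n. lam i \<noteq> 0"
    and "\<exists>j\<in>{1..m}. mu j \<noteq> 0"
    and "whitK lam mu \<subseteq> S"
    and "\<forall>p\<in>S. \<forall>q\<in>S. fa_add p q \<in> S"
    and "\<forall>c. \<forall>p\<in>S. fa_scale c p \<in> S"
    and "word [] \<in> S"
    and "\<forall>r f v. v \<in> S \<longrightarrow> finsupp v \<longrightarrow> Top lam mu r f v \<in> S"
  shows "\<forall>v. finsupp v \<longrightarrow> v \<in> S"
proof (intro allI impI)
  fix v assume fv: "finsupp v"
  have clS: "closedT S" using assms(7,8) unfolding closedT_def by blast
  have W: "word u \<in> S" for u
    by (rule all_words[OF assms(2-6) clS assms(10,9)])
  have "finite F \<Longrightarrow> (\<lambda>w. if w \<in> F then v w else 0) \<in> S" for F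
  proof (induction F rule: finite_induct)
    case empty
    show ?case by (rule lin[OF clS W[of "[]"] W[of "[]"], where \<alpha>=0 and \<beta>=0]) simp
  next
    case (insert u F)
    show ?case
      by (rule lin[OF clS W[of u] insert.IH, where \<alpha>="v u" and \<beta>=1]) (use insert.hyps in \<open>auto simp: word_def\<close>)
  qed
  moreover have "finite {w. v w \<noteq> 0}" using fv unfolding finsupp_def .
  ultimately have "(\<lambda>w. if w \<in> {w. v w \<noteq> 0} then v w else 0) \<in> S" by blast
  moreover have "(\<lambda>w. if w \<in> {w. v w \<noteq> 0} then v w else 0) = v" by auto
  ultimately show "v \<in> S" by simp
qed

end
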